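(* Let $\mathcal{D}$ be a distribution supported on $[0,1]$, let $0<p_1<p_2<\cdots<p_T\le1$, set $p_{T+1}=1$, and let $Q_t=\sup\{y:\Pr_{x\sim\mathcal{D}}(x\le y)\le p_t\}$ for $t=1,\dots,T$. Define generalized binomial voting as the scoring rule in which each voter gives the alternative she ranks in position $k$ the score $$s_k=\sum_{t=1}^T Q_t\left(\sum_{\ell=k}^m\binom{m}{\ell}(1-p_t)^\ell p_t^{m-\ell}-\sum_{\ell=k}^m\binom{m}{\ell}(1-p_{t+1})^\ell p_{t+1}^{m-\ell}\right),$$ selecting an alternative with the largest total score (ties broken arbitrarily). Then for all $n,m$ and every preference profile $\sigma$, the selected alternative $g(\sigma)$ satisfies $\mathbb{E}[\mathrm{sw}(g(\sigma),u)]\ge\beta\max_{j\in A}\mathbb{E}[\mathrm{sw}(j,u)]$ with $\beta=\sum_{s=1}^T Q_s(p_{s+1}-p_s)$.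
   Context: There are $n$ voters and $m$ alternatives $A=\{1,\dots,m\}$. A preference profile $\sigma$ consists of a ranking of $A$ for each voter; position $1$ is the top. Given $\mathcal{D}$ and $\sigma$, a random utility profile $u$ consistent with $\sigma$ is generated as follows: independently for each voter $i$, draw $m$ i.i.d. samples from $\mathcal{D}$ and assign them, from highest to lowest, to the alternatives in the order of voter $i$'s ranking. The social welfare of $j$ is $\mathrm{sw}(j,u)=\sum_i u_{ij}$; expectations are over $u$. *)

theory Defs
  imports "HOL-Probability.Probability"
begin

(* k-th largest (k = 1 is the largest) among the values x 0, ..., x (m-1) *)
definition kth_largest :: "nat \<Rightarrow> nat \<Rightarrow> (nat \<Rightarrow> real) \<Rightarrow> real" where
  "kth_largest m k x = rev (sort (map x [0..<m])) ! (k - 1)"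

(* A preference profile: pos i j \<in> {1..m} is the position of alternative j
   in voter i's ranking (position 1 = top); each pos i is a bijection A \<rightarrow> {1..m}. *)
definition is_profile :: "nat \<Rightarrow> nat \<Rightarrow> (nat \<Rightarrow> nat \<Rightarrow> nat) \<Rightarrow> bool" where
  "is_profile n m pos \<longleftrightarrow> (\<forall>i<n. bij_betw (pos i) {1..m} {1..m})"

(* Sample space: for each voter i < n, m i.i.d. samples \<omega> (i,l), l < m, from D *)
definition sample_space :: "nat \<Rightarrow> nat \<Rightarrow> real measure \<Rightarrow> (nat \<times> nat \<Rightarrow> real) measure" where
  "sample_space n m D = PiM ({..<n} \<times> {..<m}) (\<lambda>_. D)"

(* random utility u_ij consistent with the profile: the samples of voter i assigned
   from highest to lowest along her ranking *)
definition util :: "nat \<Rightarrow> (nat \<Rightarrow> nat \<Rightarrow> nat) \<Rightarrow> (nat \<times> nat \<Rightarrow> real) \<Rightarrow> nat \<Rightarrow> nat \<Rightarrow> real" where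
  "util m pos \<omega> i j = kth_largest m (pos i j) (\<lambda>l. \<omega> (i, l))"

definition sw :: "nat \<Rightarrow> nat \<Rightarrow> (nat \<Rightarrow> nat \<Rightarrow> nat) \<Rightarrow> nat \<Rightarrow> (nat \<times> nat \<Rightarrow> real) \<Rightarrow> real" where
  "sw n m pos j \<omega> = (\<Sum>i<n. util m pos \<omega> i j)"

definition expected_sw :: "real measure \<Rightarrow> nat \<Rightarrow> nat \<Rightarrow> (nat \<Rightarrow> nat \<Rightarrow> nat) \<Rightarrow> nat \<Rightarrow> real" where
  "expected_sw D n m pos j = integral\<^sup>L (sample_space n m D) (sw n m pos j)"

definition quantile :: "real measure \<Rightarrow> real \<Rightarrow> real" where
  "quantile D q = Sup {y. measure D {..y} \<le> q}"

definition pext :: "nat \<Rightarrow> (nat \<Rightarrow> real) \<Rightarrow> nat \<Rightarrow> real" where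
  "pext T p t = (if t = T + 1 then 1 else p t)"

definition binom_tail :: "nat \<Rightarrow> nat \<Rightarrow> real \<Rightarrow> real" where
  "binom_tail m k q = (\<Sum>l=k..m. real (m choose l) * (1 - q) ^ l * q ^ (m - l))"

definition gbv_score :: "real measure \<Rightarrow> nat \<Rightarrow> (nat \<Rightarrow> real) \<Rightarrow> nat \<Rightarrow> nat \<Rightarrow> real" where
  "gbv_score D T p m k = (\<Sum>t=1..T. quantile D (p t) *
      (binom_tail m k (pext T p t) - binom_tail m k (pext T p (t + 1))))"

definition total_score :: "real measure \<Rightarrow> nat \<Rightarrow> (nat \<Rightarrow> real) \<Rightarrow> nat \<Rightarrow> nat \<Rightarrow> (nat \<Rightarrow> nat \<Rightarrow> nat) \<Rightarrow> nat \<Rightarrow> real" where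
  "total_score D T p n m pos j = (\<Sum>i<n. gbv_score D T p m (pos i j))"

definition gbv_beta :: "real measure \<Rightarrow> nat \<Rightarrow> (nat \<Rightarrow> real) \<Rightarrow> real" where
  "gbv_beta D T p = (\<Sum>s=1..T. quantile D (p s) * (pext T p (s + 1) - pext T p s))"

end

theory Submission
  imports Defs
begin


lemma length_filter_perm:
  assumes "mset xs = mset ys" shows "length (filter P xs) = length (filter P ys)"
  by (metis assms mset_filter size_mset)

lemma sorted_card_ge:
  fixes ys :: "real list"
  assumes s: "sorted ys" and j: "j < length ys"
  shows "c \<le> ys ! j \<longleftrightarrow> length ys - j \<le> card {i. i < length ys \<and> c \<le> ys ! i}"
proof
  assume h: "c \<le> ys ! j"
  have "{j..<length ys} \<subseteq> {i. i < length ys \<and> c \<le> ys ! i}"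
  proof
    fix i assume "i \<in> {j..<length ys}"
    then have "j \<le> i" "i < length ys" by auto
    then have "ys ! j \<le> ys ! i" by (rule sorted_nth_mono[OF s])
    then show "i \<in> {i. i < length ys \<and> c \<le> ys ! i}" using h \<open>i < length ys\<close> by simp
  qed
  from card_mono[OF _ this] show "length ys - j \<le> card {i. i < length ys \<and> c \<le> ys ! i}" by simp
next
  assume h: "length ys - j \<le> card {i. i < length ys \<and> c \<le> ys ! i}"
  show "c \<le> ys ! j"
  proof (rule ccontr)
    assume nc: "\<not> c \<le> ys ! j"
    have "{i. i < length ys \<and> c \<le> ys ! i} \<subseteq> {Suc j..<length ys}"
    proof
      fix i assume i: "i \<in> {i. i < length ys \<and> c \<le> ys ! i}"
      have "\<not> i \<le> j"
      proof
        assume "i \<le> j"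
        then have "ys ! i \<le> ys ! j" using j by (rule sorted_nth_mono[OF s])
        then show False using i nc by simp
      qed
      then show "i \<in> {Suc j..<length ys}" using i by simp
    qed
    from card_mono[OF _ this] have "card {i. i < length ys \<and> c \<le> ys ! i} \<le> length ys - Suc j" by simp
    with h j show False by linarith
  qed
qed

lemma kth_char:
  assumes k: "1 \<le> k" "k \<le> m"
  shows "c \<le> kth_largest m k x \<longleftrightarrow> k \<le> card {l\<in>{..<m}. c \<le> x l}"
proof -
  define ys where "ys = sort (map x [0..<m])"
  have len: "length ys = m" by (simp add: ys_def)
  have "kth_largest m k x = rev ys ! (k - 1)"
    unfolding kth_largest_def ys_def ..
  also have "\<dots> = ys ! (length ys - Suc (k - 1))"
    by (rule rev_nth) (use k len in simp)
  also have "length ys - Suc (k - 1) = m - k" using k len by simp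
  finally have kth: "kth_largest m k x = ys ! (m - k)" .
  have cd: "card {i. i < length ys \<and> c \<le> ys ! i} = card {l\<in>{..<m}. c \<le> x l}"
  proof -
    have "card {i. i < length ys \<and> c \<le> ys ! i} = length (filter (\<lambda>y. c \<le> y) ys)"
      by (simp add: length_filter_conv_card)
    also have "\<dots> = length (filter (\<lambda>y. c \<le> y) (map x [0..<m]))"
      unfolding ys_def by (rule length_filter_perm) simp
    also have "\<dots> = card {i. i < m \<and> c \<le> map x [0..<m] ! i}"
      by (simp add: length_filter_conv_card)
    also have "{i. i < m \<and> c \<le> map x [0..<m] ! i} = {i. i < m \<and> c \<le> x i}"
      by (intro Collect_cong) auto
    also have "{i. i < m \<and> c \<le> x i} = {l\<in>{..<m}. c \<le> x l}" by auto
    finally show ?thesis .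
  qed
  have "sorted ys" by (simp add: ys_def)
  from sorted_card_ge[OF this, of "m - k" c] have
    "c \<le> ys ! (m - k) \<longleftrightarrow> m - (m - k) \<le> card {i. i < length ys \<and> c \<le> ys ! i}"
    using k len by simp
  also have "m - (m - k) = k" using k by simp
  finally show ?thesis unfolding kth cd .
qed



lemma bt_zero: "binom_tail m 0 q = 1"
proof -
  have "binom_tail m 0 q = (\<Sum>l\<le>m. real (m choose l) * (1 - q) ^ l * q ^ (m - l))"
    unfolding binom_tail_def by (simp add: atLeast0AtMost)
  also have "\<dots> = ((1 - q) + q) ^ m" by (rule binomial_ring[symmetric])
  finally show ?thesis by simp
qed

lemma bt_gt: "m < k \<Longrightarrow> binom_tail m k q = 0"
  unfolding binom_tail_def by simp

lemma bt_one: "1 \<le> k \<Longrightarrow> binom_tail m k 1 = 0"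
  unfolding binom_tail_def by (intro sum.neutral) auto

lemma bt_mm0: "binom_tail m m 0 = 1"
  unfolding binom_tail_def by simp

lemma bt_rec: "binom_tail (Suc m) (Suc k) q = q * binom_tail m (Suc k) q + (1 - q) * binom_tail m k q"
proof -
  define a where "a = 1 - q"
  have "binom_tail (Suc m) (Suc k) q = (\<Sum>l=k..m. real (Suc m choose Suc l) * a ^ Suc l * q ^ (m - l))"
    unfolding binom_tail_def a_def sum.shift_bounds_cl_Suc_ivl by simp
  also have "\<dots> = (\<Sum>l=k..m. real (m choose l) * a ^ Suc l * q ^ (m - l))
      + (\<Sum>l=k..m. real (m choose Suc l) * a ^ Suc l * q ^ (m - l))"
    by (simp add: sum.distrib[symmetric] algebra_simps)
  also have "(\<Sum>l=k..m. real (m choose l) * a ^ Suc l * q ^ (m - l)) = a * binom_tail m k q"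
    unfolding binom_tail_def a_def by (simp add: sum_distrib_left algebra_simps)
  also have "(\<Sum>l=k..m. real (m choose Suc l) * a ^ Suc l * q ^ (m - l))
      = (\<Sum>l=Suc k..Suc m. real (m choose l) * a ^ l * q ^ (Suc m - l))"
    unfolding sum.shift_bounds_cl_Suc_ivl by simp
  also have "\<dots> = q * binom_tail m (Suc k) q"
  proof (cases "k \<le> m")
    case True
    have "(\<Sum>l=Suc k..Suc m. real (m choose l) * a ^ l * q ^ (Suc m - l))
        = (\<Sum>l=Suc k..m. real (m choose l) * a ^ l * q ^ (Suc m - l))"
      using True by (simp add: sum.cl_ivl_Suc)
    also have "\<dots> = (\<Sum>l=Suc k..m. q * (real (m choose l) * a ^ l * q ^ (m - l)))"
      by (intro sum.cong) (auto simp: Suc_diff_le)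
    finally show ?thesis unfolding binom_tail_def a_def sum_distrib_left .
  next
    case False
    then show ?thesis unfolding binom_tail_def by simp
  qed
  finally show ?thesis unfolding a_def by simp
qed

lemma bt_sum: "(\<Sum>k=1..m. binom_tail m k q) = real m * (1 - q)"
proof (induction m)
  case 0
  then show ?case by simp
next
  case (Suc m)
  have "(\<Sum>k=1..Suc m. binom_tail (Suc m) k q) = (\<Sum>k=0..m. binom_tail (Suc m) (Suc k) q)"
    using sum.shift_bounds_cl_Suc_ivl[of "\<lambda>k. binom_tail (Suc m) k q" 0 m] by simp
  also have "\<dots> = q * (\<Sum>k=0..m. binom_tail m (Suc k) q) + (1 - q) * (\<Sum>k=0..m. binom_tail m k q)"
    by (simp add: bt_rec sum.distrib sum_distrib_left)
  also have "(\<Sum>k=0..m. binom_tail m (Suc k) q) = (\<Sum>k=1..m. binom_tail m k q)"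
  proof -
    have "(\<Sum>k=0..m. binom_tail m (Suc k) q) = (\<Sum>k=1..Suc m. binom_tail m k q)"
      using sum.shift_bounds_cl_Suc_ivl[of "\<lambda>k. binom_tail m k q" 0 m] by simp
    also have "\<dots> = (\<Sum>k=1..m. binom_tail m k q)"
      by (simp add: sum.cl_ivl_Suc bt_gt)
    finally show ?thesis .
  qed
  also have "(\<Sum>k=0..m. binom_tail m k q) = 1 + (\<Sum>k=1..m. binom_tail m k q)"
    by (simp add: sum.atLeast_Suc_atMost bt_zero)
  finally show ?case using Suc.IH by (simp add: algebra_simps)
qed



lemma real_card_filter: "finite L \<Longrightarrow> real (card {x\<in>L. P x}) = (\<Sum>x\<in>L. if P x then 1 else 0)"
proof -
  assume f: "finite L"
  have "real (card {x\<in>L. P x}) = (\<Sum>x\<in>{x\<in>L. P x}. 1)" by simp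
  also have "\<dots> = (\<Sum>x\<in>L. if P x then 1 else 0)" by (rule sum.inter_filter[OF f])
  finally show ?thesis .
qed

lemma meas_cnt:
  assumes "finite L" "L \<subseteq> J" "S \<in> sets D"
  shows "(\<lambda>\<omega>. if k \<le> card {x\<in>L. \<omega> x \<in> S} then 1 else 0 :: real) \<in> borel_measurable (PiM J (\<lambda>_. D))"
proof -
  have eq: "(\<lambda>\<omega>. if k \<le> card {x\<in>L. \<omega> x \<in> S} then 1 else 0 :: real)
      = (\<lambda>\<omega>. if real k \<le> (\<Sum>x\<in>L. indicator S (\<omega> x)) then 1 else 0)"
  proof
    fix \<omega> :: "'a \<Rightarrow> 'b"
    have "real (card {x\<in>L. \<omega> x \<in> S}) = (\<Sum>x\<in>L. indicator S (\<omega> x))"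
      using real_card_filter[OF assms(1)] by (simp add: indicator_def of_bool_def)
    note hh = this
    show "(if k \<le> card {x\<in>L. \<omega> x \<in> S} then 1 else 0 :: real)
      = (if real k \<le> (\<Sum>x\<in>L. indicator S (\<omega> x)) then 1 else 0)"
      unfolding hh[symmetric] by simp
  qed
  have h: "(\<lambda>\<omega>. \<Sum>x\<in>L. indicator S (\<omega> x) :: real) \<in> borel_measurable (PiM J (\<lambda>_. D))"
  proof (rule borel_measurable_sum)
    fix x assume "x \<in> L"
    then have "(\<lambda>\<omega>. \<omega> x) \<in> measurable (PiM J (\<lambda>_. D)) D"
      using assms(2) by (intro measurable_component_singleton) auto
    from measurable_compose[OF this borel_measurable_indicator[OF assms(3)]]
    show "(\<lambda>\<omega>. indicator S (\<omega> x) :: real) \<in> borel_measurable (PiM J (\<lambda>_. D))" .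
  qed
  have st: "{\<omega> \<in> space (PiM J (\<lambda>_. D)). real k \<le> (\<Sum>x\<in>L. indicator S (\<omega> x))} \<in> sets (PiM J (\<lambda>_. D))"
    using h unfolding borel_measurable_iff_ge by blast
  show ?thesis unfolding eq
    by (rule measurable_If[OF borel_measurable_const borel_measurable_const st])
qed



definition cnt_ind :: "'a set \<Rightarrow> 'b set \<Rightarrow> nat \<Rightarrow> ('a \<Rightarrow> 'b) \<Rightarrow> real" where
  "cnt_ind L S k \<omega> = (if k \<le> card {x\<in>L. \<omega> x \<in> S} then 1 else 0)"

lemma cnt_ind_integrable:
  assumes "prob_space D" "finite L" "L \<subseteq> J" "S \<in> sets D"
  shows "integrable (PiM J (\<lambda>_. D)) (cnt_ind L S k)"
proof -
  interpret P: prob_space "PiM J (\<lambda>_. D)" by (rule prob_space_PiM) (use assms(1) in auto)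
  show ?thesis
  proof (rule P.integrable_const_bound[where B=1])
    show "AE x in PiM J (\<lambda>_. D). norm (cnt_ind L S k x) \<le> 1"
      by (rule AE_I2) (simp add: cnt_ind_def)
    show "cnt_ind L S k \<in> borel_measurable (PiM J (\<lambda>_. D))"
      using meas_cnt[OF assms(2-4)] unfolding cnt_ind_def[abs_def] .
  qed
qed

lemma cnt_ind_mono: "cnt_ind L S (Suc k) \<omega> \<le> cnt_ind L S k \<omega>"
  unfolding cnt_ind_def by auto

lemma count_prob:
  assumes D: "prob_space D" and S: "S \<in> sets D" and q: "1 - q \<le> measure D S" "0 \<le> q" "q \<le> 1"
  shows "finite J \<Longrightarrow> L \<subseteq> J \<Longrightarrow> binom_tail (card L) k q \<le> integral\<^sup>L (PiM J (\<lambda>_. D)) (cnt_ind L S k)"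
proof (induction J arbitrary: L k rule: finite_induct)
  case empty
  interpret P: prob_space "PiM {} (\<lambda>_. D)" by (rule prob_space_PiM) (use D in auto)
  have L: "L = {}" using empty by auto
  show ?case
  proof (cases k)
    case 0
    then show ?thesis using L by (simp add: cnt_ind_def bt_zero P.prob_space)
  next
    case (Suc k')
    then show ?thesis using L by (simp add: cnt_ind_def bt_gt)
  qed
next
  case (insert j J)
  interpret P: prob_space "PiM J (\<lambda>_. D)" by (rule prob_space_PiM) (use D in auto)
  interpret PI: prob_space "PiM (insert j J) (\<lambda>_. D)" by (rule prob_space_PiM) (use D in auto)
  interpret DD: prob_space D by (rule D)
  interpret PS: product_sigma_finite "\<lambda>_. D"
    by unfold_locales
  have finL: "finite L" using insert by (meson finite_insert finite_subset)
  have int_eq: "integral\<^sup>L (PiM (insert j J) (\<lambda>_. D)) (cnt_ind L S k)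
      = (\<integral>x. (\<integral>y. cnt_ind L S k (x(j:=y)) \<partial>D) \<partial>PiM J (\<lambda>_. D))"
    by (rule PS.product_integral_insert[OF insert(1,2)])
       (rule cnt_ind_integrable[OF D finL insert(4) S])
  show ?case
  proof (cases "j \<in> L")
    case False
    then have LJ: "L \<subseteq> J" using insert by auto
    have "\<And>x y. cnt_ind L S k (x(j:=y)) = cnt_ind L S k x"
    proof -
      fix x y
      have "{z\<in>L. (x(j:=y)) z \<in> S} = {z\<in>L. x z \<in> S}" using False by auto
      then show "cnt_ind L S k (x(j:=y)) = cnt_ind L S k x" unfolding cnt_ind_def by simp
    qed
    then have "integral\<^sup>L (PiM (insert j J) (\<lambda>_. D)) (cnt_ind L S k) = integral\<^sup>L (PiM J (\<lambda>_. D)) (cnt_ind L S k)"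
      using int_eq by (simp add: DD.prob_space)
    then show ?thesis using insert.IH[OF LJ] by simp
  next
    case True
    define L' where "L' = L - {j}"
    have L'J: "L' \<subseteq> J" using insert True by (auto simp: L'_def)
    have cardL: "card L = Suc (card L')" unfolding L'_def
      by (rule card_Suc_Diff1[OF finL True, symmetric])
    show ?thesis
    proof (cases k)
      case 0
      then show ?thesis by (simp add: cnt_ind_def bt_zero PI.prob_space)
    next
      case (Suc k')
      define g where "g = cnt_ind L' S (Suc k')"
      define h where "h = cnt_ind L' S k'"
      have cnt: "card {z\<in>L. (x(j:=y)) z \<in> S} = card {z\<in>L'. x z \<in> S} + (if y \<in> S then 1 else 0)" for x y
      proof -
        have fin: "finite {z\<in>L'. x z \<in> S}" using finL by (simp add: L'_def)
        have "{z\<in>L. (x(j:=y)) z \<in> S} = (if y \<in> S then insert j {z\<in>L'. x z \<in> S} else {z\<in>L'. x z \<in> S})"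
          using True by (auto simp: L'_def)
        then show ?thesis using fin by (simp add: L'_def)
      qed
      have pw: "cnt_ind L S k (x(j:=y)) = g x + (h x - g x) * indicator S y" for x y
        unfolding g_def h_def cnt_ind_def cnt Suc by (auto simp: indicator_def)
      have ig: "integrable (PiM J (\<lambda>_. D)) g" unfolding g_def
        using finL L'J by (intro cnt_ind_integrable[OF D _ _ S]) (auto simp: L'_def)
      have ih: "integrable (PiM J (\<lambda>_. D)) h" unfolding h_def
        using finL L'J by (intro cnt_ind_integrable[OF D _ _ S]) (auto simp: L'_def)
      have inner: "(\<integral>y. cnt_ind L S k (x(j:=y)) \<partial>D) = g x + (h x - g x) * measure D S" for x
      proof -
        have "(\<integral>y. cnt_ind L S k (x(j:=y)) \<partial>D) = (\<integral>y. g x + (h x - g x) * indicator S y \<partial>D)"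
          by (simp add: pw)
        also have "\<dots> = (\<integral>y. g x \<partial>D) + (\<integral>y. (h x - g x) * indicator S y \<partial>D)"
        proof (rule Bochner_Integration.integral_add[where f="\<lambda>y. g x" and g="\<lambda>y. (h x - g x) * indicator S y"])
          show "integrable D (\<lambda>y. (h x - g x) * indicator S y)"
            using S by (intro integrable_mult_right integrable_real_indicator) (auto simp: less_top[symmetric])
        qed simp
        also have "\<dots> = g x + (h x - g x) * measure D S"
          using S by (simp add: DD.prob_space Int_absorb2 sets.sets_into_space)
        finally show ?thesis .
      qed
      have "integral\<^sup>L (PiM (insert j J) (\<lambda>_. D)) (cnt_ind L S k)
          = (\<integral>x. g x + (h x - g x) * measure D S \<partial>PiM J (\<lambda>_. D))"
        using int_eq inner by simp
      also have "\<dots> = integral\<^sup>L (PiM J (\<lambda>_. D)) g + (integral\<^sup>L (PiM J (\<lambda>_. D)) h - integral\<^sup>L (PiM J (\<lambda>_. D)) g) * measure D S"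
        using ig ih by simp
      finally have eq: "integral\<^sup>L (PiM (insert j J) (\<lambda>_. D)) (cnt_ind L S k) = 
          integral\<^sup>L (PiM J (\<lambda>_. D)) g + (integral\<^sup>L (PiM J (\<lambda>_. D)) h - integral\<^sup>L (PiM J (\<lambda>_. D)) g) * measure D S" .
      define G where "G = integral\<^sup>L (PiM J (\<lambda>_. D)) g"
      define H where "H = integral\<^sup>L (PiM J (\<lambda>_. D)) h"
      have GH: "G \<le> H" unfolding G_def H_def
        by (rule integral_mono[OF ig ih]) (simp add: g_def h_def cnt_ind_mono)
      have IG: "binom_tail (card L') (Suc k') q \<le> G" unfolding G_def g_def by (rule insert.IH[OF L'J])
      have IH: "binom_tail (card L') k' q \<le> H" unfolding H_def h_def by (rule insert.IH[OF L'J])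
      have "binom_tail (card L) k q = q * binom_tail (card L') (Suc k') q + (1 - q) * binom_tail (card L') k' q"
        unfolding cardL Suc by (rule bt_rec)
      also have "\<dots> \<le> q * G + (1 - q) * H"
        using IG IH q by (intro add_mono mult_left_mono) auto
      also have "\<dots> = G + (H - G) * (1 - q)" by (simp add: algebra_simps)
      also have "\<dots> \<le> G + (H - G) * measure D S"
        using GH q by (intro add_left_mono mult_left_mono) auto
      finally show ?thesis using eq unfolding G_def H_def by simp
    qed
  qed
qed



lemma quant_props:
  assumes D: "prob_space D" and sD: "sets D = sets borel" and m01: "measure D {0..1} = 1"
    and p: "0 \<le> p" "p < 1"
  shows "0 \<le> quantile D p" "quantile D p \<le> 1" "1 - p \<le> measure D {quantile D p..}"
    and "\<And>p'. p \<le> p' \<Longrightarrow> p' < 1 \<Longrightarrow> quantile D p \<le> quantile D p'"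
proof -
  interpret DD: prob_space D by (rule D)
  interpret F: finite_borel_measure D
    by unfold_locales (rule sD)
  have sp: "space D = UNIV" using sets_eq_imp_space_eq[OF sD] by simp
  have ev[simp]: "A \<in> sets D" if "A \<in> sets borel" for A using that sD by simp
  define Y where "Y q = {y. measure D {..y} \<le> q}" for q
  have neg: "measure D {..y} = 0" if "y < 0" for y
  proof -
    have "measure D {..y} \<le> measure D (space D - {0..1})"
      using that by (intro DD.finite_measure_mono) (auto simp: sp)
    also have "\<dots> = 0" using DD.prob_compl[of "{0..1}"] m01 by simp
    finally show ?thesis using measure_nonneg[of D "{..y}"] by linarith
  qed
  have big: "\<not> measure D {..y} \<le> q" if "1 \<le> y" "q < 1" for y q
  proof -
    have "measure D {0..1} \<le> measure D {..y}"
      using that by (intro DD.finite_measure_mono) auto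
    then show ?thesis using m01 that by linarith
  qed
  have ne: "Y q \<noteq> {}" if "0 \<le> q" for q
  proof -
    have "(-1::real) \<in> Y q" unfolding Y_def using neg[of "-1"] that by simp
    then show ?thesis by blast
  qed
  have ub: "y < 1" if "y \<in> Y q" "q < 1" for y q using big[of y q] that unfolding Y_def by force
  have bdd: "bdd_above (Y q)" if "q < 1" for q by (rule bdd_aboveI[where M=1]) (use ub[OF _ that] in \<open>auto intro: less_imp_le\<close>)
  have Q: "quantile D q = Sup (Y q)" for q unfolding quantile_def Y_def ..
  show "quantile D p \<le> 1" unfolding Q using ne[OF p(1)] ub[OF _ p(2)]
    by (intro cSup_least) (auto intro: less_imp_le)
  show "0 \<le> quantile D p"
  proof (rule ccontr)
    assume "\<not> 0 \<le> quantile D p"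
    then have q0: "quantile D p < 0" by simp
    have "quantile D p / 2 \<in> Y p" unfolding Y_def using neg[of "quantile D p / 2"] q0 p by simp
    from cSup_upper[OF this bdd[OF p(2)]] q0 show False unfolding Q by simp
  qed
  show "quantile D p \<le> quantile D p'" if "p \<le> p'" "p' < 1" for p'
    unfolding Q using ne[OF p(1)] bdd[OF that(2)] that(1)
    by (intro cSup_subset_mono) (auto simp: Y_def)
  have left: "measure D {..<quantile D p} \<le> p"
  proof (rule tendsto_upperbound[OF F.cdf_at_left])
    show "\<forall>\<^sub>F x in at_left (quantile D p). cdf D x \<le> p"
      unfolding eventually_at_left_field
    proof (intro exI conjI allI impI)
      show "quantile D p - 1 < quantile D p" by simp
      fix y assume "quantile D p - 1 < y" "y < quantile D p"
      then obtain y' where y': "y' \<in> Y p" "y < y'"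
        using less_cSup_iff[OF ne[OF p(1)] bdd[OF p(2)]] unfolding Q by auto
      have "cdf D y \<le> cdf D y'" using y' by (intro F.cdf_nondecreasing) simp
      also have "\<dots> \<le> p" using y' unfolding Y_def cdf_def by simp
      finally show "cdf D y \<le> p" .
    qed
  qed simp
  have "measure D {quantile D p..} = 1 - measure D {..<quantile D p}"
  proof -
    have "{quantile D p..} = space D - {..<quantile D p}" by (auto simp: sp)
    then show ?thesis using DD.prob_compl[of "{..<quantile D p}"] by simp
  qed
  then show "1 - p \<le> measure D {quantile D p..}" using left by simp
qed



lemma step_bound:
  fixes Qp :: "nat \<Rightarrow> real" and x :: real
  assumes mono: "\<And>t. 1 \<le> t \<Longrightarrow> t < N \<Longrightarrow> Qp t \<le> Qp (Suc t)" and q1: "1 \<le> N \<Longrightarrow> 0 \<le> Qp 1" and x: "0 \<le> x"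
  shows "(\<Sum>t=1..N. (Qp t - (if t = 1 then 0 else Qp (t - 1))) * (if Qp t \<le> x then 1 else 0)) \<le> x
       \<and> (\<Sum>t=1..N. (Qp t - (if t = 1 then 0 else Qp (t - 1))) * (if Qp t \<le> x then 1 else 0)) \<le> (if N = 0 then 0 else Qp N)"
  using mono q1
proof (induction N)
  case 0
  then show ?case using x by simp
next
  case (Suc N)
  have IH: "(\<Sum>t=1..N. (Qp t - (if t = 1 then 0 else Qp (t - 1))) * (if Qp t \<le> x then 1 else 0)) \<le> x
       \<and> (\<Sum>t=1..N. (Qp t - (if t = 1 then 0 else Qp (t - 1))) * (if Qp t \<le> x then 1 else 0)) \<le> (if N = 0 then 0 else Qp N)"
    using Suc.prems by (intro Suc.IH) auto
  have m: "N \<ge> 1 \<Longrightarrow> Qp N \<le> Qp (Suc N)" using Suc.prems(1)[of N] by simp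
  have q1: "0 \<le> Qp 1" using Suc.prems(2) by simp
  define s where "s = (\<Sum>t=1..N. (Qp t - (if t = 1 then 0 else Qp (t - 1))) * (if Qp t \<le> x then 1 else 0))"
  have eq: "(\<Sum>t=1..Suc N. (Qp t - (if t = 1 then 0 else Qp (t - 1))) * (if Qp t \<le> x then 1 else 0))
     = s + (Qp (Suc N) - (if N = 0 then 0 else Qp N)) * (if Qp (Suc N) \<le> x then 1 else 0)"
    unfolding s_def by (simp add: sum.cl_ivl_Suc)
  show ?case
  proof (cases "N = 0")
    case True
    then show ?thesis using eq s_def q1 x by auto
  next
    case False
    then show ?thesis using eq IH m unfolding s_def[symmetric] by (auto split: if_splits)
  qed
qed

lemma sum_by_parts:
  fixes Qp B :: "nat \<Rightarrow> real"
  shows "(\<Sum>t=1..N. Qp t * (B t - B (Suc t))) + (if N = 0 then 0 else Qp N * B (Suc N))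
       = (\<Sum>t=1..N. (Qp t - (if t = 1 then 0 else Qp (t - 1))) * B t)"
proof (induction N)
  case 0
  then show ?case by simp
next
  case (Suc N)
  then show ?case by (cases "N = 0") (simp_all add: sum.cl_ivl_Suc algebra_simps)
qed



lemma voter_basic:
  fixes I :: "(nat \<times> nat) set"
  assumes D: "prob_space D" and sD: "sets D = sets borel" and m01: "measure D {0..1} = 1"
    and fin: "finite I" and Li: "\<forall>l<m. (i,l) \<in> I"
    and k: "1 \<le> k" "k \<le> m"
  shows "(\<lambda>\<omega>. kth_largest m k (\<lambda>l. \<omega> (i,l))) \<in> borel_measurable (PiM I (\<lambda>_. D))"
    and "AE \<omega> in PiM I (\<lambda>_. D). 0 \<le> kth_largest m k (\<lambda>l. \<omega> (i,l)) \<and> kth_largest m k (\<lambda>l. \<omega> (i,l)) \<le> 1"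
    and "\<And>c \<omega>. (if c \<le> kth_largest m k (\<lambda>l. \<omega> (i,l)) then 1 else 0) = cnt_ind ((\<lambda>l. (i,l)) ` {..<m}) {c..} k \<omega>"
    and "card ((\<lambda>l. (i,l)) ` {..<m}) = m"
    and "(\<lambda>l. (i,l)) ` {..<m} \<subseteq> I"
proof -
  interpret DD: prob_space D by (rule D)
  define L where "L = (\<lambda>l. (i,l)) ` {..<m}"
  define X where "X = (\<lambda>\<omega>. kth_largest m k (\<lambda>l. \<omega> (i,l :: nat)))"
  have inj: "inj_on (\<lambda>l. (i,l)) A" for A by (auto simp: inj_on_def)
  show cL: "card ((\<lambda>l. (i,l)) ` {..<m}) = m" by (simp add: card_image[OF inj])
  show LI: "(\<lambda>l. (i,l)) ` {..<m} \<subseteq> I" using Li by auto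
  have cnt_eq: "card {x\<in>L. \<omega> x \<in> {c..}} = card {l\<in>{..<m}. c \<le> \<omega> (i,l)}" for c \<omega>
  proof -
    have "{x\<in>L. \<omega> x \<in> {c..}} = (\<lambda>l. (i,l)) ` {l\<in>{..<m}. c \<le> \<omega> (i,l)}" unfolding L_def by auto
    then show ?thesis by (simp add: card_image[OF inj])
  qed
  have ch: "(if c \<le> X \<omega> then 1 else 0) = cnt_ind L {c..} k \<omega>" for c \<omega>
    unfolding X_def cnt_ind_def cnt_eq kth_char[OF k] ..
  then show "\<And>c \<omega>. (if c \<le> kth_largest m k (\<lambda>l. \<omega> (i,l)) then 1 else 0) = cnt_ind ((\<lambda>l. (i,l)) ` {..<m}) {c..} k \<omega>"
    unfolding X_def L_def .
  have finL: "finite L" unfolding L_def by simp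
  have LI': "L \<subseteq> I" using LI unfolding L_def .
  have "X \<in> borel_measurable (PiM I (\<lambda>_. D))"
    unfolding borel_measurable_iff_ge
  proof
    fix c
    have m: "cnt_ind L {c..} k \<in> borel_measurable (PiM I (\<lambda>_. D))"
      using meas_cnt[OF finL LI', of "{c..}" D k] sD unfolding cnt_ind_def[abs_def] by simp
    have "{w \<in> space (PiM I (\<lambda>_. D)). c \<le> X w} = {w \<in> space (PiM I (\<lambda>_. D)). 1 \<le> cnt_ind L {c..} k w}"
    proof -
      have iff: "c \<le> X w \<longleftrightarrow> 1 \<le> cnt_ind L {c..} k w" for w
        using ch[of c w] by (cases "c \<le> X w") auto
      show ?thesis using iff by blast
    qed
    also have "\<dots> \<in> sets (PiM I (\<lambda>_. D))" using m unfolding borel_measurable_iff_ge by blast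
    finally show "{w \<in> space (PiM I (\<lambda>_. D)). c \<le> X w} \<in> sets (PiM I (\<lambda>_. D))" .
  qed
  then show "(\<lambda>\<omega>. kth_largest m k (\<lambda>l. \<omega> (i,l))) \<in> borel_measurable (PiM I (\<lambda>_. D))"
    unfolding X_def .
  have ae01: "AE \<omega> in PiM I (\<lambda>_. D). \<forall>x\<in>I. \<omega> x \<in> {0..1}"
  proof (rule AE_finite_allI[OF fin])
    fix x assume "x \<in> I"
    moreover have "AE y in D. y \<in> {0..1}" using m01 by (rule DD.AE_prob_1)
    ultimately show "AE \<omega> in PiM I (\<lambda>_. D). \<omega> x \<in> {0..1}"
      using D by (intro AE_PiM_component) auto
  qed
  show "AE \<omega> in PiM I (\<lambda>_. D). 0 \<le> kth_largest m k (\<lambda>l. \<omega> (i,l)) \<and> kth_largest m k (\<lambda>l. \<omega> (i,l)) \<le> 1"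
    using ae01
  proof eventually_elim
    case (elim \<omega>)
    then have w: "\<And>l. l < m \<Longrightarrow> 0 \<le> \<omega> (i,l) \<and> \<omega> (i,l) \<le> 1" using Li by auto
    have "{l\<in>{..<m}. 0 \<le> \<omega> (i,l)} = {..<m}" using w by auto
    then have "0 \<le> X \<omega>" unfolding X_def kth_char[OF k] using k by simp
    moreover have "X \<omega> \<le> 1"
    proof (rule ccontr)
      assume "\<not> X \<omega> \<le> 1"
      have "k \<le> card {l\<in>{..<m}. X \<omega> \<le> \<omega> (i,l)}" unfolding X_def kth_char[OF k, symmetric] by simp
      then have "{l\<in>{..<m}. X \<omega> \<le> \<omega> (i,l)} \<noteq> {}" using k by (metis card.empty le_zero_eq one_neq_zero le_trans)
      then obtain l where "l < m" "X \<omega> \<le> \<omega> (i,l)" by auto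
      then show False using w[of l] \<open>\<not> X \<omega> \<le> 1\<close> by auto
    qed
    ultimately show ?case unfolding X_def by simp
  qed
qed



lemma p_facts:
  fixes p :: "nat \<Rightarrow> real"
  assumes p1: "0 < p 1" and inc0: "\<forall>t. 1 \<le> t \<and> t < T \<longrightarrow> p t < p (t + 1)" and pT: "p T \<le> 1"
  shows p_mono: "\<And>t t'. 1 \<le> t \<Longrightarrow> t \<le> t' \<Longrightarrow> t' \<le> T \<Longrightarrow> p t \<le> p t'"
    and p_pos: "\<And>t. 1 \<le> t \<Longrightarrow> t \<le> T \<Longrightarrow> 0 < p t"
    and p_le1: "\<And>t. 1 \<le> t \<Longrightarrow> t \<le> T \<Longrightarrow> p t \<le> 1"
    and p_lt1: "\<And>t. 1 \<le> t \<Longrightarrow> t < T \<Longrightarrow> p t < 1"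
proof -
  have inc: "\<And>t. 1 \<le> t \<Longrightarrow> t < T \<Longrightarrow> p t < p (t + 1)" using inc0 by blast
  have pd: "p t \<le> p (t + d)" if "1 \<le> t" "t + d \<le> T" for t d
    using that
  proof (induction d)
    case 0 then show ?case by simp
  next
    case (Suc d)
    then have "p (t + d) < p (t + d + 1)" using inc[of "t + d"] by simp
    with Suc show ?case by simp
  qed
  show pm: "p t \<le> p t'" if "1 \<le> t" "t \<le> t'" "t' \<le> T" for t t'
    using pd[of t "t' - t"] that by simp
  show "0 < p t" if "1 \<le> t" "t \<le> T" for t using pm[of 1 t] that p1 by simp
  show "p t \<le> 1" if "1 \<le> t" "t \<le> T" for t using pm[of t T] that pT by simp
  show "p t < 1" if "1 \<le> t" "t < T" for t
    using pm[of "t + 1" T] inc[of t] that pT by simp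
qed



lemma voter_lower:
  fixes I :: "(nat \<times> nat) set" and p :: "nat \<Rightarrow> real"
  assumes D: "prob_space D" and sD: "sets D = sets borel" and m01: "measure D {0..1} = 1"
    and fin: "finite I" and Li: "\<And>l. l < m \<Longrightarrow> (i,l) \<in> I"
    and k: "1 \<le> k" "k \<le> m"
    and p1: "0 < p 1" and inc: "\<And>t. 1 \<le> t \<Longrightarrow> t < T \<Longrightarrow> p t < p (t + 1)" and pT: "p T \<le> 1"
  shows "integrable (PiM I (\<lambda>_. D)) (\<lambda>\<omega>. kth_largest m k (\<lambda>l. \<omega> (i,l)))"
    and "integral\<^sup>L (PiM I (\<lambda>_. D)) (\<lambda>\<omega>. kth_largest m k (\<lambda>l. \<omega> (i,l))) \<le> 1"
    and "gbv_score D T p m k \<le> integral\<^sup>L (PiM I (\<lambda>_. D)) (\<lambda>\<omega>. kth_largest m k (\<lambda>l. \<omega> (i,l)))"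
proof -
  interpret P: prob_space "PiM I (\<lambda>_. D)" by (rule prob_space_PiM) (use D in auto)
  define M where "M = PiM I (\<lambda>_. D)"
  define X where "X = (\<lambda>\<omega>. kth_largest m k (\<lambda>l. \<omega> (i,l :: nat)))"
  define L where "L = (\<lambda>l. (i,l)) ` {..<m}"
  have Li': "\<forall>l<m. (i,l) \<in> I" using Li by blast
  note vb0 = voter_basic[OF D sD m01 fin Li' k]
  have vb1: "X \<in> borel_measurable M" using vb0(1) unfolding X_def M_def .
  have vb2: "AE \<omega> in M. 0 \<le> X \<omega> \<and> X \<omega> \<le> 1" using vb0(2) unfolding X_def M_def .
  have vb3: "\<And>c \<omega>. (if c \<le> X \<omega> then 1 else 0) = cnt_ind L {c..} k \<omega>" using vb0(3) unfolding X_def L_def .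
  have vb4: "card L = m" using vb0(4) unfolding L_def .
  have vb5: "L \<subseteq> I" using vb0(5) unfolding L_def .
  note vb = vb1 vb2 vb3 vb4 vb5
  have intX: "integrable M X" unfolding M_def
  proof (rule P.integrable_const_bound[where B=1])
    show "AE x in PiM I (\<lambda>_. D). norm (X x) \<le> 1" using vb(2) unfolding M_def
      by (rule AE_mp) (intro AE_I2, auto)
  qed (use vb(1) M_def in simp)
  then show "integrable (PiM I (\<lambda>_. D)) (\<lambda>\<omega>. kth_largest m k (\<lambda>l. \<omega> (i,l)))"
    unfolding M_def X_def .
  have "integral\<^sup>L M X \<le> integral\<^sup>L M (\<lambda>_. 1)"
    by (rule integral_mono_AE[OF intX]) (use vb(2) in \<open>auto simp: M_def\<close>)
  then show "integral\<^sup>L (PiM I (\<lambda>_. D)) (\<lambda>\<omega>. kth_largest m k (\<lambda>l. \<omega> (i,l))) \<le> 1"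
    unfolding M_def X_def by (simp add: P.prob_space)
  have inc': "\<forall>t. 1 \<le> t \<and> t < T \<longrightarrow> p t < p (t + 1)" using inc by blast
  note pf = p_facts[OF p1 inc' pT]
  define Qp where "Qp t = (if p t < 1 then quantile D (p t) else 1)" for t
  define B where "B t = binom_tail m k (pext T p t)" for t
  define dQ where "dQ t = Qp t - (if t = 1 then 0 else Qp (t - 1))" for t
  note qp = quant_props[OF D sD m01]
  have Qp01: "0 \<le> Qp t \<and> Qp t \<le> 1" if "1 \<le> t" "t \<le> T" for t
    using qp(1,2)[of "p t"] pf(2)[OF that] unfolding Qp_def by auto
  have Qpmono: "Qp t \<le> Qp (Suc t)" if "1 \<le> t" "t < T" for t
  proof (cases "p (Suc t) < 1")
    case True
    then show ?thesis unfolding Qp_def using pf(4)[OF that] inc[OF that] pf(2)[of t] that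
      by (auto intro!: qp(4))
  next
    case False
    then show ?thesis unfolding Qp_def using Qp01[of t] that Qp_def by auto
  qed
  have BT: "B (Suc T) = 0" unfolding B_def pext_def using k by (simp add: bt_one)
  have score: "gbv_score D T p m k = (\<Sum>t=1..T. Qp t * (B t - B (Suc t)))"
    unfolding gbv_score_def
  proof (rule sum.cong)
    fix t assume t: "t \<in> {1..T}"
    show "quantile D (p t) * (binom_tail m k (pext T p t) - binom_tail m k (pext T p (t + 1)))
        = Qp t * (B t - B (Suc t))"
    proof (cases "p t < 1")
      case True then show ?thesis unfolding Qp_def B_def by simp
    next
      case False
      then have tT: "t = T" using pf(4)[of t] t by force
      then have "p t = 1" using pf(3)[of t] t False by simp
      then have "B t = 0" unfolding B_def pext_def using k tT by (simp add: bt_one)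
      moreover have "B (Suc t) = 0" using BT tT by simp
      ultimately show ?thesis using tT unfolding B_def by simp
    qed
  qed simp
  also have "\<dots> = (\<Sum>t=1..T. dQ t * B t)"
  proof -
    have z: "(if T = 0 then 0 else Qp T * B (Suc T)) = 0" using BT by simp
    show ?thesis using sum_by_parts[of Qp B T] unfolding dQ_def z by simp
  qed
  also have "\<dots> \<le> (\<Sum>t=1..T. dQ t * integral\<^sup>L M (cnt_ind L {Qp t..} k))"
  proof (rule sum_mono)
    fix t assume t: "t \<in> {1..T}"
    have dq: "0 \<le> dQ t"
    proof (cases "t = 1")
      case True then show ?thesis unfolding dQ_def using Qp01[of 1] t by simp
    next
      case False
      then have a: "1 \<le> t - 1" "t - 1 < T" using t by auto
      have "Qp (t - 1) \<le> Qp (Suc (t - 1))" by (rule Qpmono[OF a])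
      then show ?thesis unfolding dQ_def using False a by simp
    qed
    have ms: "1 - p t \<le> measure D {Qp t..}"
    proof (cases "p t < 1")
      case True then show ?thesis unfolding Qp_def using qp(3)[of "p t"] pf(2)[of t] t by simp
    next
      case False then show ?thesis using pf(3)[of t] t by simp
    qed
    have "binom_tail (card L) k (p t) \<le> integral\<^sup>L M (cnt_ind L {Qp t..} k)"
      unfolding M_def
      by (rule count_prob[OF D _ ms _ _ fin]) (use sD pf(2)[of t] pf(3)[of t] t vb(5) in auto)
    moreover have "B t = binom_tail (card L) k (p t)" unfolding B_def pext_def using t vb(4) by simp
    ultimately show "dQ t * B t \<le> dQ t * integral\<^sup>L M (cnt_ind L {Qp t..} k)"
      using dq by (simp add: mult_left_mono)
  qed
  also have "\<dots> = integral\<^sup>L M (\<lambda>\<omega>. \<Sum>t=1..T. dQ t * cnt_ind L {Qp t..} k \<omega>)"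
  proof -
    have ii: "integrable M (cnt_ind L {Qp t..} k)" for t
      unfolding M_def using sD vb(5) by (intro cnt_ind_integrable[OF D]) (auto simp: L_def)
    have "integral\<^sup>L M (\<lambda>\<omega>. \<Sum>t=1..T. dQ t * cnt_ind L {Qp t..} k \<omega>)
        = (\<Sum>t=1..T. integral\<^sup>L M (\<lambda>\<omega>. dQ t * cnt_ind L {Qp t..} k \<omega>))"
      by (rule Bochner_Integration.integral_sum) (use ii in auto)
    then show ?thesis using ii by simp
  qed
  also have "\<dots> \<le> integral\<^sup>L M X"
  proof (rule integral_mono_AE)
    have ii: "integrable M (cnt_ind L {Qp t..} k)" for t
      unfolding M_def using sD vb(5) by (intro cnt_ind_integrable[OF D]) (auto simp: L_def)
    show "integrable M (\<lambda>\<omega>. \<Sum>t=1..T. dQ t * cnt_ind L {Qp t..} k \<omega>)" using ii by auto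
    show "integrable M X" by (rule intX)
    show "AE \<omega> in M. (\<Sum>t=1..T. dQ t * cnt_ind L {Qp t..} k \<omega>) \<le> X \<omega>"
      using vb(2)
    proof (rule AE_mp, intro AE_I2 impI)
      fix \<omega> assume elim: "0 \<le> X \<omega> \<and> X \<omega> \<le> 1"
      have "(\<Sum>t=1..T. dQ t * cnt_ind L {Qp t..} k \<omega>) = (\<Sum>t=1..T. dQ t * (if Qp t \<le> X \<omega> then 1 else 0))"
        using vb(3) by simp
      also have "\<dots> \<le> X \<omega>" unfolding dQ_def
        using step_bound[of T Qp "X \<omega>"] Qpmono Qp01[of 1] elim by auto
      finally show "(\<Sum>t=1..T. dQ t * cnt_ind L {Qp t..} k \<omega>) \<le> X \<omega>" .
    qed
  qed
  finally show "gbv_score D T p m k \<le> integral\<^sup>L (PiM I (\<lambda>_. D)) (\<lambda>\<omega>. kth_largest m k (\<lambda>l. \<omega> (i,l)))"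
    unfolding M_def X_def .
qed



lemma score_sum:
  "(\<Sum>k=1..m. gbv_score D T p m k) = real m * gbv_beta D T p"
proof -
  have "(\<Sum>k=1..m. gbv_score D T p m k)
      = (\<Sum>t=1..T. quantile D (p t) * ((\<Sum>k=1..m. binom_tail m k (pext T p t)) - (\<Sum>k=1..m. binom_tail m k (pext T p (t + 1)))))"
    unfolding gbv_score_def
  proof -
    have "(\<Sum>k=1..m. \<Sum>t=1..T. quantile D (p t) * (binom_tail m k (pext T p t) - binom_tail m k (pext T p (t + 1))))
       = (\<Sum>t=1..T. \<Sum>k=1..m. quantile D (p t) * (binom_tail m k (pext T p t) - binom_tail m k (pext T p (t + 1))))"
      by (rule sum.swap)
    also have "\<dots> = (\<Sum>t=1..T. quantile D (p t) * ((\<Sum>k=1..m. binom_tail m k (pext T p t)) - (\<Sum>k=1..m. binom_tail m k (pext T p (t + 1)))))"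
      by (intro sum.cong refl) (simp add: sum_subtractf right_diff_distrib sum_distrib_left)
    finally show "(\<Sum>k=1..m. \<Sum>t=1..T. quantile D (p t) * (binom_tail m k (pext T p t) - binom_tail m k (pext T p (t + 1))))
       = (\<Sum>t=1..T. quantile D (p t) * ((\<Sum>k=1..m. binom_tail m k (pext T p t)) - (\<Sum>k=1..m. binom_tail m k (pext T p (t + 1)))))" .
  qed
  also have "\<dots> = (\<Sum>t=1..T. real m * (quantile D (p t) * (pext T p (t + 1) - pext T p t)))"
    unfolding bt_sum by (intro sum.cong refl) (simp add: algebra_simps)
  also have "\<dots> = real m * gbv_beta D T p"
    unfolding gbv_beta_def by (simp add: sum_distrib_left)
  finally show ?thesis .
qed

theorem theorem8:
  fixes D :: "real measure" and T n m :: nat and p :: "nat \<Rightarrow> real"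
    and pos :: "nat \<Rightarrow> nat \<Rightarrow> nat" and g :: nat
  assumes "prob_space D" and "sets D = sets borel" and "measure D {0..1} = 1"
    and "0 < p 1" and "\<And>t. 1 \<le> t \<Longrightarrow> t < T \<Longrightarrow> p t < p (t + 1)" and "p T \<le> 1"
    and "is_profile n m pos"
    and "g \<in> {1..m}"
    and "\<And>j. j \<in> {1..m} \<Longrightarrow> total_score D T p n m pos j \<le> total_score D T p n m pos g"
  shows "expected_sw D n m pos g \<ge> gbv_beta D T p * Max (expected_sw D n m pos ` {1..m})"
proof -
  define I where "I = {..<n} \<times> {..<m}"
  define M where "M = PiM I (\<lambda>_. D)"
  have SM: "sample_space n m D = M" unfolding sample_space_def I_def M_def ..
  have fin: "finite I" unfolding I_def by simp
  have m1: "1 \<le> m" using assms(8) by simp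
  have bij: "i < n \<Longrightarrow> bij_betw (pos i) {1..m} {1..m}" for i
    using assms(7) unfolding is_profile_def by blast
  have posk: "pos i j \<in> {1..m}" if "i < n" "j \<in> {1..m}" for i j
    using bij_betw_apply[OF bij[OF that(1)] that(2)] .
  define U where "U i j = integral\<^sup>L M (\<lambda>\<omega>. kth_largest m (pos i j) (\<lambda>l. \<omega> (i,l)))" for i j
  have VL: "integrable M (\<lambda>\<omega>. kth_largest m (pos i j) (\<lambda>l. \<omega> (i,l))) \<and> U i j \<le> 1
      \<and> gbv_score D T p m (pos i j) \<le> U i j" if ij: "i < n" "j \<in> {1..m}" for i j
  proof -
    have Li: "\<And>l. l < m \<Longrightarrow> (i,l) \<in> I" using ij unfolding I_def by auto
    have k: "1 \<le> pos i j" "pos i j \<le> m" using posk[OF ij] by auto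
    note vl = voter_lower[of D I m i "pos i j" p T, OF assms(1) assms(2) assms(3) fin Li k(1) k(2) assms(4) assms(5) assms(6)]
    then show ?thesis unfolding U_def M_def by blast
  qed
  have E: "expected_sw D n m pos j = (\<Sum>i<n. U i j)" if j: "j \<in> {1..m}" for j
  proof -
    have "expected_sw D n m pos j = integral\<^sup>L M (\<lambda>\<omega>. \<Sum>i<n. kth_largest m (pos i j) (\<lambda>l. \<omega> (i,l)))"
      unfolding expected_sw_def SM sw_def util_def ..
    also have "\<dots> = (\<Sum>i<n. U i j)" unfolding U_def
      by (rule Bochner_Integration.integral_sum) (use VL j in auto)
    finally show ?thesis .
  qed
  have Ele: "expected_sw D n m pos j \<le> real n" if j: "j \<in> {1..m}" for j
  proof -
    have "(\<Sum>i<n. U i j) \<le> (\<Sum>i<n. 1)" by (rule sum_mono) (use VL j in auto)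
    then show ?thesis using E[OF j] by simp
  qed
  have Max_le: "Max (expected_sw D n m pos ` {1..m}) \<le> real n"
    using Ele m1 by (subst Max_le_iff) auto
  have tot_le: "total_score D T p n m pos g \<le> expected_sw D n m pos g"
    unfolding E[OF assms(8)] total_score_def by (rule sum_mono) (use VL assms(8) in auto)
  have total_sum: "(\<Sum>j=1..m. total_score D T p n m pos j) = real n * (real m * gbv_beta D T p)"
  proof -
    have "(\<Sum>j=1..m. total_score D T p n m pos j) = (\<Sum>i<n. \<Sum>j=1..m. gbv_score D T p m (pos i j))"
      unfolding total_score_def by (rule sum.swap)
    also have "\<dots> = (\<Sum>i<n. \<Sum>k=1..m. gbv_score D T p m k)"
      by (rule sum.cong[OF refl]) (rule sum.reindex_bij_betw[OF bij], simp)
    also have "\<dots> = real n * (real m * gbv_beta D T p)" by (simp only: score_sum) simp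
    finally show ?thesis .
  qed
  have "(\<Sum>j=1..m. total_score D T p n m pos j) \<le> real (card {1..m}) * total_score D T p n m pos g"
    by (rule sum_bounded_above) (rule assms(9))
  then have "real m * (real n * gbv_beta D T p) \<le> real m * total_score D T p n m pos g"
    using total_sum by (simp add: algebra_simps)
  then have nb: "real n * gbv_beta D T p \<le> total_score D T p n m pos g"
    using m1 by (simp add: mult_le_cancel_left)
  have beta_nn: "0 \<le> gbv_beta D T p"
    unfolding gbv_beta_def
  proof (rule sum_nonneg)
    fix s assume s: "s \<in> {1..T}"
    have inc': "\<forall>t. 1 \<le> t \<and> t < T \<longrightarrow> p t < p (t + 1)" using assms(5) by blast
    note pf = p_facts[OF assms(4) inc' assms(6)]
    note qp = quant_props[OF assms(1-3)]
    show "0 \<le> quantile D (p s) * (pext T p (s + 1) - pext T p s)"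
    proof (cases "s < T")
      case True
      then have "0 \<le> quantile D (p s)" using qp(1)[of "p s"] pf(2)[of s] pf(4)[of s] s by auto
      moreover have "p s < p (s + 1)" using assms(5)[of s] True s by auto
      ultimately show ?thesis unfolding pext_def using True by simp
    next
      case False
      then have sT: "s = T" using s by simp
      show ?thesis
      proof (cases "p s < 1")
        case True
        then have "0 \<le> quantile D (p s)" using qp(1)[of "p s"] pf(2)[of s] s by auto
        then show ?thesis unfolding pext_def using sT True by simp
      next
        case False
        then have "p s = 1" using pf(3)[of s] s by simp
        then show ?thesis unfolding pext_def using sT by simp
      qed
    qed
  qed
  have "gbv_beta D T p * Max (expected_sw D n m pos ` {1..m}) \<le> gbv_beta D T p * real n"
    by (rule mult_left_mono[OF Max_le beta_nn])
  also have "\<dots> \<le> total_score D T p n m pos g" using nb by (simp add: algebra_simps)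
  also have "\<dots> \<le> expected_sw D n m pos g" by (rule tot_le)
  finally show ?thesis .
qed

end
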